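(* Let $q=2^m$ and let $e$ be an integer with $1\le e<m$. Then every $e$-Klenian polynomial $f\in\mathbb F_q[X,Y]$ has a companion.
   Context: $q$ is a prime power and $\mathbb F_q=\{c_0,\dots,c_{q-1}\}$ is a fixed enumeration; $\mathfrak S_q$ is the symmetric group of permutations of $\mathbb F_q$, composed right to left, written in cycle notation. Every function $\mathbb F_q^2\to\mathbb F_q$ is identified with the unique polynomial in $\mathbb F_q[X,Y]$ of degree $<q$ in each variable representing it. $f\in\mathbb F_q[X,Y]$ is a local permutation polynomial (LPP) if $x\mapsto f(x,y_0)$ and $y\mapsto f(x_0,y)$ are permutations of $\mathbb F_q$ for all $x_0,y_0$. A permutation polynomial tuple is $(\beta_0,\dots,\beta_{q-1})\in\mathfrak S_q^q$ such that $\beta_i^{-1}\beta_j$ has no fixed point whenever $i\ne j$; LPPs $f$ correspond bijectively to such tuples via $f(x,\beta_i(x))=c_i$ for all $x$ and all $i$. Two LPPs $f,g$ are orthogonal (companions) if for every $(a,b)\in\mathbb F_q^2$ the system $f(X,Y)=a$, $g(X,Y)=b$ has exactly one solution in $\mathbb F_q^2$; a companion of $f$ is an LPP orthogonal to $f$. $e$-Klenian polynomials: for $q=p^r$, $0\le e<r$, $\ell=p^e$, $t=q/\ell$, let $\alpha=\prod_{i=0}^{t-1}(c_{i\ell},c_{i\ell+1},\dots,c_{(i+1)\ell-1})$, $\beta=\prod_{j=0}^{\ell-1}(c_j,c_{j+\ell},\dots,c_{j+(t-1)\ell})$ and $G=\{\alpha^i\beta^j:0\le i\le \ell-1,0\le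 j\le t-1\}$ (a subgroup of $\mathfrak S_q$ of order $q$ whose non-identity elements have no fixed points); an $e$-Klenian polynomial is an LPP whose permutation polynomial tuple consists of the $q$ elements of $G$ in some order. *)

theory Defs
  imports Main "HOL-Library.Cardinality"
begin

text \<open>Polynomials in F_q[X,Y] of degree < q in each variable are identified with
  functions F_q x F_q -> F_q (as in the paper); we represent them as curried functions.\<close>

definition is_LPP :: "('a \<Rightarrow> 'a \<Rightarrow> 'a) \<Rightarrow> bool" where
  "is_LPP f \<longleftrightarrow> (\<forall>y. bij (\<lambda>x. f x y)) \<and> (\<forall>x. bij (\<lambda>y. f x y))"

definition is_pp_tuple :: "(nat \<Rightarrow> 'a \<Rightarrow> 'a) \<Rightarrow> bool" where
  "is_pp_tuple B \<longleftrightarrow> (\<forall>i<CARD('a). bij (B i)) \<and>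
     (\<forall>i<CARD('a). \<forall>j<CARD('a). i \<noteq> j \<longrightarrow> (\<forall>x. (inv (B i) \<circ> B j) x \<noteq> x))"

definition tuple_of :: "(nat \<Rightarrow> 'a) \<Rightarrow> ('a \<Rightarrow> 'a \<Rightarrow> 'a) \<Rightarrow> (nat \<Rightarrow> 'a \<Rightarrow> 'a) \<Rightarrow> bool" where
  "tuple_of c f B \<longleftrightarrow> is_pp_tuple B \<and> (\<forall>i<CARD('a). \<forall>x. f x (B i x) = c i)"

definition orthogonal :: "('a \<Rightarrow> 'a \<Rightarrow> 'a) \<Rightarrow> ('a \<Rightarrow> 'a \<Rightarrow> 'a) \<Rightarrow> bool" where
  "orthogonal f g \<longleftrightarrow> (\<forall>a b. \<exists>!xy. f (fst xy) (snd xy) = a \<and> g (fst xy) (snd xy) = b)"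

definition companion :: "('a \<Rightarrow> 'a \<Rightarrow> 'a) \<Rightarrow> ('a \<Rightarrow> 'a \<Rightarrow> 'a) \<Rightarrow> bool" where
  "companion f g \<longleftrightarrow> is_LPP g \<and> orthogonal f g"

definition idx :: "(nat \<Rightarrow> 'a) \<Rightarrow> 'a \<Rightarrow> nat" where
  "idx c x = inv_into {..<CARD('a)} c x"

text \<open>alpha = prod_i (c_{i l}, ..., c_{(i+1)l - 1}):  c_{i l + k} -> c_{i l + (k+1 mod l)}.\<close>
definition kl_alpha :: "(nat \<Rightarrow> 'a) \<Rightarrow> nat \<Rightarrow> 'a \<Rightarrow> 'a" where
  "kl_alpha c l x = (let n = idx c x in c ((n div l) * l + (n mod l + 1) mod l))"

text \<open>beta = prod_j (c_j, c_{j+l}, ..., c_{j+(t-1)l}) with t = q/l: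
  c_{i l + j} -> c_{((i+1) mod t) l + j}.\<close>
definition kl_beta :: "(nat \<Rightarrow> 'a) \<Rightarrow> nat \<Rightarrow> 'a \<Rightarrow> 'a" where
  "kl_beta c l x = (let n = idx c x; t = CARD('a) div l in c (((n div l + 1) mod t) * l + n mod l))"

definition kl_group :: "(nat \<Rightarrow> 'a) \<Rightarrow> nat \<Rightarrow> ('a \<Rightarrow> 'a) set" where
  "kl_group c l = {(kl_alpha c l ^^ i) \<circ> (kl_beta c l ^^ j) | i j. i < l \<and> j < CARD('a) div l}"

definition e_Klenian :: "(nat \<Rightarrow> 'a) \<Rightarrow> nat \<Rightarrow> nat \<Rightarrow> ('a \<Rightarrow> 'a \<Rightarrow> 'a) \<Rightarrow> bool" where
  "e_Klenian c p e f \<longleftrightarrow> is_LPP f \<and>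
     (\<exists>B. tuple_of c f B \<and> bij_betw B {..<CARD('a)} (kl_group c (p ^ e)))"

end

theory Submission
  imports Defs
begin


definition orth :: "int \<Rightarrow> int \<Rightarrow> (int \<Rightarrow> int \<Rightarrow> int) \<Rightarrow> (int \<Rightarrow> int \<Rightarrow> int) \<Rightarrow> bool" where
 "orth T L u v \<longleftrightarrow> (\<forall>i k i' k'. 0 \<le> i \<and> i < T \<and> 0 \<le> k \<and> k < L \<and> 0 \<le> i' \<and> i' < T \<and> 0 \<le> k' \<and> k' < L \<longrightarrow>
   ((T dvd u i k - u i' k' \<and> L dvd v i k - v i' k') \<longrightarrow> i = i' \<and> k = k') \<and>
   ((T dvd (u i k - i) - (u i' k' - i') \<and> L dvd (v i k - k) - (v i' k' - k')) \<longrightarrow> i = i' \<and> k = k'))"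

lemma dvd_small: "(M::int) dvd d \<Longrightarrow> \<bar>d\<bar> < M \<Longrightarrow> d = 0"
  using dvd_imp_le_int by force

lemma orth_swap: "orth T L u v \<Longrightarrow> orth L T (\<lambda>k i. v i k) (\<lambda>k i. u i k)"
  unfolding orth_def by metis

lemma orth_eq: "T \<ge> 1 \<Longrightarrow> orth T T (\<lambda>i k. k) (\<lambda>i k. i + k)"
  unfolding orth_def
proof (intro allI impI conjI)
  fix i k i' k' :: int
  assume r: "0 \<le> i \<and> i < T \<and> 0 \<le> k \<and> k < T \<and> 0 \<le> i' \<and> i' < T \<and> 0 \<le> k' \<and> k' < T"
  {
    assume a: "T dvd k - k' \<and> T dvd i + k - (i' + k')"
    have "k - k' = 0" using a r by (intro dvd_small[of T]) auto
    moreover have "T dvd i - i'" using a dvd_diff[of T "i + k - (i' + k')" "k - k'"] by (auto simp: algebra_simps)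
    hence "i - i' = 0" using r by (intro dvd_small[of T]) auto
    ultimately show "i = i'" "k = k'" by auto
  }
  {
    assume a: "T dvd k - i - (k' - i') \<and> T dvd i + k - k - (i' + k' - k')"
    have "i - i' = 0" using a r by (intro dvd_small[of T]) auto
    moreover have "T dvd k - k'" using a dvd_add[of T "k - i - (k' - i')" "i - i'"] by (auto simp: algebra_simps)
    hence "k - k' = 0" using r by (intro dvd_small[of T]) auto
    ultimately show "i = i'" "k = k'" by auto
  }
qed



lemma orth_lt:
  fixes T L s :: int
  assumes T2: "T \<ge> 2" and eT: "even T" and Ls: "L = T * s" and es: "even s" and s2: "s \<ge> 2"
  shows "orth T L (\<lambda>i k. (if 2*k \<ge> L then 1 else 0) - i) (\<lambda>i k. 2*k + (if 2*k \<ge> L then 1 else 0) + s*i)"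
  unfolding orth_def
proof (intro allI impI conjI)
  fix i k i' k' :: int
  assume r: "0 \<le> i \<and> i < T \<and> 0 \<le> k \<and> k < L \<and> 0 \<le> i' \<and> i' < T \<and> 0 \<le> k' \<and> k' < L"
  define h where "h = (if 2*k \<ge> L then 1 else 0::int)"
  define h' where "h' = (if 2*k' \<ge> L then 1 else 0::int)"
  have eL: "even L" using Ls es by simp
  then obtain M where M: "L = 2*M" by blast
  {
    assume a: "T dvd (if 2*k \<ge> L then 1 else 0) - i - ((if 2*k' \<ge> L then 1 else 0) - i') \<and>
      L dvd 2*k + (if 2*k \<ge> L then 1 else 0) + s*i - (2*k' + (if 2*k' \<ge> L then 1 else 0) + s*i')"
    hence a1: "T dvd (h - i) - (h' - i')" and a2: "L dvd 2*k + h + s*i - (2*k' + h' + s*i')"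
      unfolding h_def h'_def by (auto split: if_splits)
    from a1 obtain j where j: "(h - i) - (h' - i') = T * j" by blast
    have "L dvd (2*k + h + s*i - (2*k' + h' + s*i')) + L * j" using a2 by simp
    moreover have "(2*k + h + s*i - (2*k' + h' + s*i')) + L * j = 2*(k - k') + (1+s)*(h-h')"
      
    proof -
      have "L * j = s * ((h - i) - (h' - i'))" using j Ls by (simp add: mult_ac)
      thus ?thesis by (simp add: algebra_simps)
    qed
    ultimately have d: "L dvd 2*(k - k') + (1+s)*(h-h')" by simp
    have hh: "h = h'"
    proof (rule ccontr)
      assume "h \<noteq> h'"
      hence "h - h' = 1 \<or> h - h' = -1" unfolding h_def h'_def by (auto split: if_splits)
      hence "odd ((1+s)*(h-h'))" using es by (elim disjE) simp_all
      moreover have "even (2*(k - k') + (1+s)*(h-h'))" using d eL by (meson dvd_trans)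
      ultimately show False by simp
    qed
    have "2*M dvd 2*(k - k')" using d hh M by simp
    hence "M dvd k - k'" by (subst (asm) dvd_times_left_cancel_iff) simp_all
    moreover have "\<bar>k - k'\<bar> < M" using hh r M unfolding h_def h'_def by (auto split: if_splits)
    ultimately have kk: "k = k'" using dvd_small by force
    have "T dvd i - i'" 
    proof -
      have "(h - i) - (h' - i') = -(i - i')" using hh by simp
      thus ?thesis using a1 by (metis dvd_minus_iff)
    qed
    hence "i - i' = 0" using r by (intro dvd_small[of T]) auto
    thus "i = i'" "k = k'" using kk by auto
  }
  {
    assume a: "T dvd (if 2*k \<ge> L then 1 else 0) - i - i - ((if 2*k' \<ge> L then 1 else 0) - i' - i') \<and>
      L dvd 2*k + (if 2*k \<ge> L then 1 else 0) + s*i - k - (2*k' + (if 2*k' \<ge> L then 1 else 0) + s*i' - k')"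
    hence a1: "T dvd (h - h') - 2*(i - i')" and a2: "L dvd (k - k') + (h - h') + s*(i - i')"
      unfolding h_def h'_def by (auto simp: algebra_simps)
    have hh: "h = h'"
    proof (rule ccontr)
      assume "h \<noteq> h'"
      hence "h - h' = 1 \<or> h - h' = -1" unfolding h_def h'_def by (auto split: if_splits)
      hence "odd (h - h')" by (elim disjE) simp_all
      hence "odd ((h - h') - 2*(i - i'))" by simp
      moreover have "even ((h - h') - 2*(i - i'))" using a1 eT by (meson dvd_trans)
      ultimately show False by simp
    qed
    obtain N where N: "T = 2*N" using eT by blast
    have "2*N dvd 2*(i - i')" using a1 hh N by (metis diff_self dvd_minus_iff minus_diff_eq diff_0)
    hence "N dvd i - i'" by (subst (asm) dvd_times_left_cancel_iff) simp_all
    then obtain j where j: "i - i' = N * j" by blast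
    have sj: "s*(i - i') = M * j" using j N M Ls by (simp add: mult_ac)
    have "\<bar>k - k'\<bar> < M" using hh r M unfolding h_def h'_def by (auto split: if_splits)
    have a3: "2*M dvd (k - k') + M * j" using a2 hh sj M by simp
    have ej: "even j"
    proof (rule ccontr)
      assume "odd j"
      then obtain j' where "j = 2*j' + 1" by (metis oddE)
      hence "2*M dvd (k - k') + M + 2*M*j'" using a3 by (simp add: algebra_simps)
      moreover have "(k - k') + M + 2*M*j' = 2*M*j' + ((k-k') + M)" by simp
      ultimately have "2*M dvd (k - k') + M" by (metis dvd_add_right_iff dvd_triv_left)
      then obtain z where z: "(k - k') + M = 2*M*z" by blast
      have "0 < (k-k') + M" "(k-k') + M < 2*M" using \<open>\<bar>k - k'\<bar> < M\<close> by auto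
      have Mp: "M > 0" using \<open>\<bar>k - k'\<bar> < M\<close> by auto
      show False
      proof (cases "z \<le> 0")
        case True
        hence "2*M*z \<le> 0" using Mp by (simp add: mult_nonneg_nonpos)
        thus False using z \<open>0 < (k-k') + M\<close> by simp
      next
        case False
        hence "2*M*1 \<le> 2*M*z" using Mp by (intro mult_left_mono) auto
        thus False using z \<open>(k-k') + M < 2*M\<close> by simp
      qed
    qed
    then obtain j2 where j2: "j = 2*j2" by blast
    have "T dvd i - i'" using j j2 N by simp
    hence ii: "i - i' = 0" using r by (intro dvd_small[of T]) auto
    hence "L dvd k - k'" using a2 hh by simp
    hence "k - k' = 0" using r by (intro dvd_small[of L]) auto
    thus "i = i'" "k = k'" using ii by auto
  }
qed



lemma nat_mod_int: "(x::nat) < n \<Longrightarrow> int ((y + n - x) mod n) = (int y - int x) mod int n"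
proof -
  assume "x < n"
  hence "int ((y + n - x) mod n) = (int y + int n - int x) mod int n" by (simp add: zmod_int of_nat_diff)
  also have "\<dots> = ((int y - int x) + int n) mod int n" by (simp add: algebra_simps)
  also have "\<dots> = (int y - int x) mod int n" by (rule mod_add_self2)
  finally show ?thesis .
qed


context
  fixes c :: "nat \<Rightarrow> 'a::finite" and l t :: nat
  assumes cb: "bij_betw c {..<CARD('a)} UNIV" and lt: "l * t = CARD('a)" and l0: "0 < l"
begin

lemma t0: "0 < t" using lt l0 by (metis finite_UNIV_card_ge_0 finite_class.finite_UNIV gr0I mult_0_right)

lemma tdiv: "CARD('a) div l = t" by (metis lt l0 nonzero_mult_div_cancel_left neq0_conv)

lemma idx_lt: "idx c x < CARD('a)"
  using cb unfolding bij_betw_def idx_def by (metis UNIV_I inv_into_into lessThan_iff)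
  
lemma c_idx: "c (idx c x) = x"
  unfolding idx_def using cb by (simp add: bij_betw_inv_into_right)

lemma idx_c: "n < CARD('a) \<Longrightarrow> idx c (c n) = n"
  unfolding idx_def using cb by (simp add: bij_betw_inv_into_left)

lemma c_inj: "n < CARD('a) \<Longrightarrow> n' < CARD('a) \<Longrightarrow> c n = c n' \<Longrightarrow> n = n'"
  by (metis idx_c)

lemma code_lt: "a < t \<Longrightarrow> b < l \<Longrightarrow> a * l + b < CARD('a)"
proof -
  assume "a < t" "b < l"
  hence "a * l + b < a * l + l" by simp
  also have "\<dots> = (a+1) * l" by simp
  also have "\<dots> \<le> t * l" using \<open>a < t\<close> by (intro mult_right_mono) auto
  finally show ?thesis using lt by (simp add: mult.commute)
qed

lemma code_inj: "b < l \<Longrightarrow> b' < l \<Longrightarrow> a * l + b = a' * l + b' \<Longrightarrow> a = a' \<and> b = b'"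
proof -
  assume "b < l" "b' < l" and e: "a * l + b = a' * l + b'"
  have "(a * l + b) div l = a" "(a' * l + b') div l = a'" using \<open>b < l\<close> \<open>b' < l\<close> l0 by auto
  moreover have "(a * l + b) mod l = b" "(a' * l + b') mod l = b'" using \<open>b < l\<close> \<open>b' < l\<close> l0 by auto
  ultimately show ?thesis using e by metis
qed

lemma I_lt: "idx c x div l < t"
  using idx_lt[of x] lt l0 by (simp add: div_less_iff_less_mult mult.commute)

lemma K_lt: "idx c x mod l < l" using l0 by simp

lemma idx_decomp: "idx c x = (idx c x div l) * l + idx c x mod l" by simp

lemma IK_code: "a < t \<Longrightarrow> b < l \<Longrightarrow> idx c (c (a*l+b)) div l = a \<and> idx c (c (a*l+b)) mod l = b"
  using idx_c[OF code_lt] by simp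

lemma IK_inj: "idx c x div l = idx c x' div l \<Longrightarrow> idx c x mod l = idx c x' mod l \<Longrightarrow> x = x'"
  by (metis c_idx idx_decomp)

lemma alpha_eq: "kl_alpha c l x = c (idx c x div l * l + (idx c x mod l + 1) mod l)"
  unfolding kl_alpha_def by (simp add: Let_def)

lemma beta_eq: "kl_beta c l x = c (((idx c x div l + 1) mod t) * l + idx c x mod l)"
  unfolding kl_beta_def by (simp add: Let_def tdiv)

lemma alpha_pow: "(kl_alpha c l ^^ a) x = c (idx c x div l * l + (idx c x mod l + a) mod l)"
proof (induction a)
  case 0
  then show ?case by (metis Nat.add_0_right c_idx funpow_0 idx_decomp mod_mod_trivial)
next
  case (Suc a)
  define y where "y = (kl_alpha c l ^^ a) x"
  have r: "idx c y div l = idx c x div l \<and> idx c y mod l = (idx c x mod l + a) mod l"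
    unfolding y_def Suc using IK_code I_lt l0 by simp
  have "(kl_alpha c l ^^ Suc a) x = kl_alpha c l y" by (simp add: y_def)
  also have "\<dots> = c (idx c x div l * l + (idx c x mod l + Suc a) mod l)" using r by (simp add: alpha_eq mod_Suc_eq)
  finally show ?case .
qed

lemma beta_pow: "(kl_beta c l ^^ b) x = c (((idx c x div l + b) mod t) * l + idx c x mod l)"
proof (induction b)
  case 0
  then show ?case using I_lt by (metis Nat.add_0_right c_idx funpow_0 idx_decomp mod_less)
next
  case (Suc b)
  define y where "y = (kl_beta c l ^^ b) x"
  have r: "idx c y div l = (idx c x div l + b) mod t \<and> idx c y mod l = idx c x mod l"
    unfolding y_def Suc using IK_code t0 l0 by simp
  have "(kl_beta c l ^^ Suc b) x = kl_beta c l y" by (simp add: y_def)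
  also have "\<dots> = c (((idx c x div l + Suc b) mod t) * l + idx c x mod l)" using r by (simp add: beta_eq mod_Suc_eq)
  finally show ?case .
qed

lemma ab_pow: "((kl_alpha c l ^^ a) \<circ> (kl_beta c l ^^ b)) x =
   c (((idx c x div l + b) mod t) * l + (idx c x mod l + a) mod l)"
proof -
  have "idx c ((kl_beta c l ^^ b) x) div l = (idx c x div l + b) mod t \<and> idx c ((kl_beta c l ^^ b) x) mod l = idx c x mod l"
    unfolding beta_pow using IK_code t0 l0 by simp
  thus ?thesis by (simp only: comp_apply alpha_pow)
qed


lemma inj_finite_bij: "inj (h :: 'b::finite \<Rightarrow> 'b) \<Longrightarrow> bij h"
  by (simp add: bij_def finite_UNIV_inj_surj)

lemma companion_of_orth:
  fixes f :: "'a \<Rightarrow> 'a \<Rightarrow> 'a"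
  assumes orth: "orth (int t) (int l) u v"
  and Bt: "tuple_of c f B" and Bb: "bij_betw B {..<CARD('a)} (kl_group c l)"
  shows "\<exists>g. companion f g"
proof -
  define I where "I x = idx c x div l" for x
  define K where "K x = idx c x mod l" for x
  have Ilt: "I x < t" for x unfolding I_def by (rule I_lt)
  have Klt: "K x < l" for x unfolding K_def by (rule K_lt)
  have IKinj: "I x = I x' \<Longrightarrow> K x = K x' \<Longrightarrow> x = x'" for x x' unfolding I_def K_def by (rule IK_inj)
  define na where "na x y = (K y + l - K x) mod l" for x y
  define nb where "nb x y = (I y + t - I x) mod t" for x y
  have move: "((kl_alpha c l ^^ na x y) \<circ> (kl_beta c l ^^ nb x y)) x = y" for x y
  proof -
    have "(I x + nb x y) mod t = I y" unfolding nb_def using Ilt[of x] Ilt[of y]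
      by (simp add: mod_add_right_eq)
    moreover have "(K x + na x y) mod l = K y" unfolding na_def using Klt[of x] Klt[of y]
      by (simp add: mod_add_right_eq)
    ultimately show ?thesis unfolding ab_pow I_def K_def by (metis c_idx idx_decomp)
  qed
  have q0: "0 < CARD('a)" by simp
  have F: "\<exists>i<CARD('a). f x y = c i \<and> B i = (kl_alpha c l ^^ na x y) \<circ> (kl_beta c l ^^ nb x y)" for x y
  proof -
    have "na x y < l" using l0 unfolding na_def by simp
    moreover have "nb x y < t" using t0 unfolding nb_def by simp
    ultimately have "(kl_alpha c l ^^ na x y) \<circ> (kl_beta c l ^^ nb x y) \<in> kl_group c l"
      unfolding kl_group_def tdiv by blast
    then obtain i where i: "i < CARD('a)" "B i = (kl_alpha c l ^^ na x y) \<circ> (kl_beta c l ^^ nb x y)"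
      using Bb unfolding bij_betw_def by (metis imageE lessThan_iff)
    have "f x (B i x) = c i" using Bt i(1) unfolding tuple_of_def by blast
    hence "f x y = c i" using i(2) move by simp
    thus ?thesis using i by blast
  qed
  have ev0: "((kl_alpha c l ^^ a) \<circ> (kl_beta c l ^^ b)) (c 0) = c (b * l + a)" if "a < l" "b < t" for a b
    using that ab_pow[of a b "c 0"] idx_c[OF q0] by simp
  have Fnab: "na x y = na x' y' \<and> nb x y = nb x' y'" if "f x y = f x' y'" for x y x' y'
  proof -
    obtain i where i: "i<CARD('a)" "f x y = c i" "B i = (kl_alpha c l ^^ na x y) \<circ> (kl_beta c l ^^ nb x y)"
      using F by blast
    obtain i' where i': "i'<CARD('a)" "f x' y' = c i'" "B i' = (kl_alpha c l ^^ na x' y') \<circ> (kl_beta c l ^^ nb x' y')"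
      using F by blast
    have "i = i'" using c_inj i i' that by metis
    hence "((kl_alpha c l ^^ na x y) \<circ> (kl_beta c l ^^ nb x y)) (c 0) = ((kl_alpha c l ^^ na x' y') \<circ> (kl_beta c l ^^ nb x' y')) (c 0)"
      using i i' by simp
    moreover have "na x y < l" "na x' y' < l" using l0 unfolding na_def by simp_all
    moreover have "nb x y < t" "nb x' y' < t" using t0 unfolding nb_def by simp_all
    ultimately have "c (nb x y * l + na x y) = c (nb x' y' * l + na x' y')" using ev0 by simp
    hence "nb x y * l + na x y = nb x' y' * l + na x' y'"
      using c_inj code_lt \<open>na x y < l\<close> \<open>na x' y' < l\<close> \<open>nb x y < t\<close> \<open>nb x' y' < t\<close> by blast
    thus ?thesis using code_inj \<open>na x y < l\<close> \<open>na x' y' < l\<close> by blast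
  qed
  have Fdvd: "int t dvd (int (I y) - int (I x)) - (int (I y') - int (I x')) \<and>
              int l dvd (int (K y) - int (K x)) - (int (K y') - int (K x'))" if "f x y = f x' y'" for x y x' y'
  proof -
    have "int (na x y) = int (na x' y')" "int (nb x y) = int (nb x' y')" using Fnab[OF that] by auto
    hence "(int (K y) - int (K x)) mod int l = (int (K y') - int (K x')) mod int l"
      "(int (I y) - int (I x)) mod int t = (int (I y') - int (I x')) mod int t"
      unfolding na_def nb_def using nat_mod_int Ilt Klt by metis+
    thus ?thesis by (simp add: mod_eq_dvd_iff)
  qed
  define U where "U x = u (int (I x)) (int (K x))" for x
  define V where "V x = v (int (I x)) (int (K x))" for x
  define g where "g x y = c (nat ((int (I y) - U x) mod int t) * l + nat ((int (K y) - V x) mod int l))" for x y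
  have gdvd: "int t dvd (int (I y) - U x) - (int (I y') - U x') \<and>
              int l dvd (int (K y) - V x) - (int (K y') - V x')" if "g x y = g x' y'" for x y x' y'
  proof -
    define A where "A x y = nat ((int (I y) - U x) mod int t)" for x y
    define C where "C x y = nat ((int (K y) - V x) mod int l)" for x y
    have Alt: "A x y < t" for x y unfolding A_def using t0 by (simp add: nat_less_iff)
    have Clt: "C x y < l" for x y unfolding C_def using l0 by (simp add: nat_less_iff)
    have "c (A x y * l + C x y) = c (A x' y' * l + C x' y')" using that unfolding g_def A_def C_def by simp
    hence "A x y * l + C x y = A x' y' * l + C x' y'" using c_inj code_lt Alt Clt by blast
    hence "A x y = A x' y'" "C x y = C x' y'" using code_inj Clt by blast+
    hence "(int (I y) - U x) mod int t = (int (I y') - U x') mod int t"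
          "(int (K y) - V x) mod int l = (int (K y') - V x') mod int l"
      unfolding A_def C_def using t0 l0 by (simp_all add: nat_eq_iff)
    thus ?thesis by (simp add: mod_eq_dvd_iff)
  qed
  have small: "a = b" if "int n dvd int a - int b" "a < n" "b < n" for a b n :: nat
    using dvd_small[of "int n" "int a - int b"] that by auto
  have orthI: "\<lbrakk>int t dvd U x - U x'; int l dvd V x - V x'\<rbrakk> \<Longrightarrow> x = x'" for x x'
    using orth Ilt[of x] Ilt[of x'] Klt[of x] Klt[of x'] IKinj[of x x'] unfolding orth_def U_def V_def
    by (metis of_nat_0_le_iff of_nat_less_iff of_nat_eq_iff)
  have orthD: "\<lbrakk>int t dvd (U x - int (I x)) - (U x' - int (I x')); int l dvd (V x - int (K x)) - (V x' - int (K x'))\<rbrakk> \<Longrightarrow> x = x'" for x x'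
    using orth Ilt[of x] Ilt[of x'] Klt[of x] Klt[of x'] IKinj[of x x'] unfolding orth_def U_def V_def
    by (metis of_nat_0_le_iff of_nat_less_iff of_nat_eq_iff)
  have LPP: "is_LPP g"
    unfolding is_LPP_def
  proof (intro conjI allI inj_finite_bij injI)
    fix y x x' assume "g x y = g x' y"
    from gdvd[OF this] show "x = x'"
      by (intro orthI) (metis dvd_minus_iff minus_diff_eq diff_diff_cancel diff_diff_eq2 add_diff_cancel_left diff_add_cancel)+
  next
    fix x y y' assume "g x y = g x y'"
    from gdvd[OF this] have "int t dvd int (I y) - int (I y')" "int l dvd int (K y) - int (K y')"
      by (simp_all add: algebra_simps)
    thus "y = y'" using small Ilt Klt IKinj by metis
  qed
  have injF: "inj (\<lambda>xy. (f (fst xy) (snd xy), g (fst xy) (snd xy)))"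
  proof (rule injI)
    fix p p' assume "(f (fst p) (snd p), g (fst p) (snd p)) = (f (fst p') (snd p'), g (fst p') (snd p'))"
    then obtain x y x' y' where p: "p = (x,y)" "p' = (x',y')" and e: "f x y = f x' y'" "g x y = g x' y'"
      by (metis prod.collapse prod.inject)
    have d1: "int t dvd (int (I y) - int (I x)) - (int (I y') - int (I x'))"
       and d2: "int l dvd (int (K y) - int (K x)) - (int (K y') - int (K x'))" using Fdvd[OF e(1)] by auto
    have d3: "int t dvd (int (I y) - U x) - (int (I y') - U x')"
       and d4: "int l dvd (int (K y) - V x) - (int (K y') - V x')" using gdvd[OF e(2)] by auto
    have "int t dvd (U x - int (I x)) - (U x' - int (I x'))"
      using dvd_diff[OF d1 d3] by (simp add: algebra_simps)
    moreover have "int l dvd (V x - int (K x)) - (V x' - int (K x'))"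
      using dvd_diff[OF d2 d4] by (simp add: algebra_simps)
    ultimately have xx: "x = x'" by (rule orthD)
    hence "int t dvd int (I y) - int (I y')" "int l dvd int (K y) - int (K y')" using d1 d2 by simp_all
    hence "y = y'" using small Ilt Klt IKinj by metis
    thus "p = p'" using p xx by simp
  qed
  have "orthogonal f g"
    unfolding orthogonal_def
  proof (intro allI)
    fix a b
    have "surj (\<lambda>xy. (f (fst xy) (snd xy), g (fst xy) (snd xy)))"
      using injF by (simp add: finite_UNIV_inj_surj)
    then obtain p where "(a,b) = (f (fst p) (snd p), g (fst p) (snd p))" by blast
    thus "\<exists>!xy. f (fst xy) (snd xy) = a \<and> g (fst xy) (snd xy) = b"
      using injF unfolding inj_def by (metis prod.inject)
  qed
  thus ?thesis using LPP unfolding companion_def by blast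
qed

end


lemma pow2_facts: "1 \<le> k \<Longrightarrow> (2::int)^k \<ge> 2 \<and> even ((2::int)^k)"
  by (cases k) auto

lemma orth_exists:
  assumes "1 \<le> e" "e < m"
  shows "\<exists>u v. orth (int (2^(m-e))) (int (2^e)) u v"
proof -
  consider "m - e < e" | "m - e = e" | "m - e > e" by linarith
  thus ?thesis
  proof cases
    case 1
    have ee: "e = (m-e) + (2*e-m)" using 1 assms by linarith
    have "(2::int)^e = 2^(m-e) * 2^(2*e-m)" by (metis ee power_add)
    moreover have "2*e - m \<ge> 1" "m - e \<ge> 1" using 1 assms by auto
    ultimately have "orth (2^(m-e)) (2^e) (\<lambda>i k. (if 2*k \<ge> 2^e then 1 else 0) - i)
        (\<lambda>i k. 2*k + (if 2*k \<ge> 2^e then 1 else 0) + 2^(2*e-m)*i)"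
      using pow2_facts by (intro orth_lt) blast+
    thus ?thesis by auto
  next
    case 2
    thus ?thesis using orth_eq[of "2^e"] by auto
  next
    case 3
    have ee: "m - e = e + (m-2*e)" using 3 assms by linarith
    have "(2::int)^(m-e) = 2^e * 2^(m-2*e)" by (metis ee power_add)
    moreover have "m - 2*e \<ge> 1" using 3 assms by auto
    ultimately have "orth (2^e) (2^(m-e)) (\<lambda>i k. (if 2*k \<ge> 2^(m-e) then 1 else 0) - i)
        (\<lambda>i k. 2*k + (if 2*k \<ge> 2^(m-e) then 1 else 0) + 2^(m-2*e)*i)"
      using pow2_facts assms by (intro orth_lt) blast+
    from orth_swap[OF this] show ?thesis by auto
  qed
qed

theorem theorem4p6:
  fixes f :: "'a::{finite,field} \<Rightarrow> 'a \<Rightarrow> 'a" and c :: "nat \<Rightarrow> 'a" and m e :: nat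
  assumes "CARD('a) = 2 ^ m"
    and "bij_betw c {..<CARD('a)} (UNIV :: 'a set)"
    and "1 \<le> e" and "e < m"
    and "e_Klenian c 2 e f"
  shows "\<exists>g. companion f g"
proof -
  obtain B where B: "tuple_of c f B" "bij_betw B {..<CARD('a)} (kl_group c (2^e))"
    using assms(5) unfolding e_Klenian_def by blast
  have lt: "2^e * 2^(m-e) = CARD('a)" using assms(1,4) by (metis le_add_diff_inverse less_imp_le power_add)
  obtain u v where o: "orth (int (2^(m-e))) (int (2^e)) u v" using orth_exists assms(3,4) by blast
  show ?thesis using companion_of_orth[OF assms(2) lt _ o B] by simp
qed


end
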